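(* Let $f_1,\dots,f_n$ be arbitrary linear functions. There exists $r>0$ such that for every real $\epsilon$ with $|\epsilon|<r$ and all permutations $\sigma,\rho$ of $[n]$: if $(f^{(\epsilon)})^\sigma\le(f^{(\epsilon)})^\rho$ then $f^\sigma\le f^\rho$.
   Context: A linear function is $f(x)=ax+b$ with $\alpha(f)=a$. For a real $\epsilon$, $f^{(\epsilon)}=f$ if $\alpha(f)\ne0$ and $f^{(\epsilon)}(x)=f(x)+\epsilon x$ if $\alpha(f)=0$. For a permutation $\sigma$, $f^\sigma=f_{\sigma(n)}\circ\cdots\circ f_{\sigma(1)}$ and $(f^{(\epsilon)})^\sigma=f^{(\epsilon)}_{\sigma(n)}\circ\cdots\circ f^{(\epsilon)}_{\sigma(1)}$. Inequalities between functions are pointwise. *)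

theory Defs
  imports "HOL-Analysis.Analysis" "HOL-Combinatorics.Permutations"
begin

text \<open>A linear function f(x) = a x + b is represented by its coefficient pair (a, b).\<close>
type_synonym linfun = "real \<times> real"

definition lin_eval :: "linfun \<Rightarrow> real \<Rightarrow> real" where
  "lin_eval f x = fst f * x + snd f"

definition alpha :: "linfun \<Rightarrow> real" where
  "alpha f = fst f"

definition perturb :: "real \<Rightarrow> linfun \<Rightarrow> linfun" where
  "perturb eps f = (if alpha f \<noteq> 0 then f else (fst f + eps, snd f))"

text \<open>f^sigma = f_{sigma(n)} o ... o f_{sigma(1)} for functions indexed by 0..n-1
  (index i here corresponds to i+1 in the paper): f_{sigma 0} is applied first.\<close>
definition perm_comp :: "nat \<Rightarrow> (nat \<Rightarrow> linfun) \<Rightarrow> (nat \<Rightarrow> nat) \<Rightarrow> real \<Rightarrow> real" where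
  "perm_comp n fs \<sigma> = foldl (\<lambda>g i. lin_eval (fs (\<sigma> i)) \<circ> g) id [0..<n]"

end

theory Submission
  imports Defs
begin

fun slope :: "nat \<Rightarrow> (nat \<Rightarrow> linfun) \<Rightarrow> (nat \<Rightarrow> nat) \<Rightarrow> real" where
  "slope 0 fs \<sigma> = 1"
| "slope (Suc n) fs \<sigma> = fst (fs (\<sigma> n)) * slope n fs \<sigma>"

fun icpt :: "nat \<Rightarrow> (nat \<Rightarrow> linfun) \<Rightarrow> (nat \<Rightarrow> nat) \<Rightarrow> real" where
  "icpt 0 fs \<sigma> = 0"
| "icpt (Suc n) fs \<sigma> = fst (fs (\<sigma> n)) * icpt n fs \<sigma> + snd (fs (\<sigma> n))"

lemma perm_comp_affine: "perm_comp n fs \<sigma> x = slope n fs \<sigma> * x + icpt n fs \<sigma>"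
proof (induction n)
  case 0 then show ?case by (simp add: perm_comp_def)
next
  case (Suc n)
  have "perm_comp (Suc n) fs \<sigma> = lin_eval (fs (\<sigma> n)) \<circ> perm_comp n fs \<sigma>"
    by (simp add: perm_comp_def)
  then show ?case using Suc by (simp add: lin_eval_def algebra_simps)
qed

lemma perturb0: "perturb 0 f = f"
  by (simp add: perturb_def)

lemma snd_perturb[simp]: "snd (perturb e f) = snd f"
  by (simp add: perturb_def)

lemma fst_perturb_tendsto: "((\<lambda>e. fst (perturb e f)) \<longlongrightarrow> fst (perturb 0 f)) (nhds 0)"
proof (cases "alpha f \<noteq> 0")
  case True then show ?thesis by (simp add: perturb_def)
next
  case False
  have "((\<lambda>e. fst f + e) \<longlongrightarrow> fst f + 0) (nhds 0)"
    by (intro tendsto_intros filterlim_ident)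
  with False show ?thesis by (simp add: perturb_def)
qed

lemma slope_tendsto: "((\<lambda>e. slope n (\<lambda>i. perturb e (fs i)) \<sigma>) \<longlongrightarrow> slope n (\<lambda>i. perturb 0 (fs i)) \<sigma>) (nhds 0)"
  by (induction n) (auto intro!: tendsto_intros fst_perturb_tendsto)

lemma icpt_tendsto: "((\<lambda>e. icpt n (\<lambda>i. perturb e (fs i)) \<sigma>) \<longlongrightarrow> icpt n (\<lambda>i. perturb 0 (fs i)) \<sigma>) (nhds 0)"
  by (induction n) (auto intro!: tendsto_intros fst_perturb_tendsto)

lemma affine_le: assumes "\<forall>x::real. a*x+b \<le> c*x+d" shows "a = c \<and> b \<le> d"
proof
  show "b \<le> d" using assms[rule_format, of 0] by simp
  show "a = c"
  proof (rule ccontr)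
    assume ne: "a \<noteq> c"
    have "a * ((d-b+1)/(a-c)) + b \<le> c * ((d-b+1)/(a-c)) + d" using assms by blast
    hence "(a-c) * ((d-b+1)/(a-c)) \<le> d - b" by (simp only: algebra_simps)
    with ne show False by simp
  qed
qed

lemma pair_eventually:
  "eventually (\<lambda>eps. (\<forall>x. perm_comp n (\<lambda>i. perturb eps (fs i)) \<sigma> x \<le> perm_comp n (\<lambda>i. perturb eps (fs i)) \<rho> x) \<longrightarrow>
              (\<forall>x. perm_comp n fs \<sigma> x \<le> perm_comp n fs \<rho> x)) (nhds 0)"
proof (cases "\<forall>x. perm_comp n fs \<sigma> x \<le> perm_comp n fs \<rho> x")
  case True then show ?thesis by simp
next
  case False
  let ?s = "\<lambda>e \<tau>. slope n (\<lambda>i. perturb e (fs i)) \<tau>"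
  let ?b = "\<lambda>e \<tau>. icpt n (\<lambda>i. perturb e (fs i)) \<tau>"
  have s0: "?s 0 \<tau> = slope n fs \<tau>" "?b 0 \<tau> = icpt n fs \<tau>" for \<tau> by (simp_all add: perturb0)
  have nn: "\<not> (slope n fs \<sigma> = slope n fs \<rho> \<and> icpt n fs \<sigma> \<le> icpt n fs \<rho>)"
    using False by (auto simp: perm_comp_affine)
  hence "eventually (\<lambda>e. \<not> (?s e \<sigma> = ?s e \<rho> \<and> ?b e \<sigma> \<le> ?b e \<rho>)) (nhds 0)"
  proof (cases "slope n fs \<sigma> = slope n fs \<rho>")
    case True
    hence gt: "icpt n fs \<sigma> - icpt n fs \<rho> > 0" using nn by simp
    have "((\<lambda>e. ?b e \<sigma> - ?b e \<rho>) \<longlongrightarrow> icpt n fs \<sigma> - icpt n fs \<rho>) (nhds 0)"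
      using tendsto_diff[OF icpt_tendsto[of n fs \<sigma>] icpt_tendsto[of n fs \<rho>]] s0 by simp
    from order_tendstoD(1)[OF this gt] show ?thesis
      by (rule eventually_mono) simp
  next
    case False
    hence ne: "slope n fs \<sigma> - slope n fs \<rho> \<noteq> 0" by simp
    have "((\<lambda>e. ?s e \<sigma> - ?s e \<rho>) \<longlongrightarrow> slope n fs \<sigma> - slope n fs \<rho>) (nhds 0)"
      using tendsto_diff[OF slope_tendsto[of n fs \<sigma>] slope_tendsto[of n fs \<rho>]] s0 by simp
    from tendsto_imp_eventually_ne[OF this ne] show ?thesis
      by (rule eventually_mono) simp
  qed
  then show ?thesis
    by (rule eventually_mono) (use affine_le in \<open>auto simp: perm_comp_affine\<close>)
qed

theorem mainTheorem15:
  fixes n :: nat and fs :: "nat \<Rightarrow> linfun"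
  shows "\<exists>r>0. \<forall>eps::real. \<bar>eps\<bar> < r \<longrightarrow>
           (\<forall>\<sigma> \<rho>. \<sigma> permutes {..<n} \<longrightarrow> \<rho> permutes {..<n} \<longrightarrow>
              (\<forall>x. perm_comp n (\<lambda>i. perturb eps (fs i)) \<sigma> x \<le> perm_comp n (\<lambda>i. perturb eps (fs i)) \<rho> x) \<longrightarrow>
              (\<forall>x. perm_comp n fs \<sigma> x \<le> perm_comp n fs \<rho> x))"
proof -
  let ?S = "{\<sigma>. \<sigma> permutes {..<n}} \<times> {\<sigma>. \<sigma> permutes {..<n}}"
  have fin: "finite ?S" using finite_permutations[of "{..<n}"] by simp
  have "eventually (\<lambda>eps. \<forall>p\<in>?S.
          (\<forall>x. perm_comp n (\<lambda>i. perturb eps (fs i)) (fst p) x \<le> perm_comp n (\<lambda>i. perturb eps (fs i)) (snd p) x) \<longrightarrow>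
              (\<forall>x. perm_comp n fs (fst p) x \<le> perm_comp n fs (snd p) x)) (nhds (0::real))"
    using fin proof (intro eventually_ball_finite ballI)
    fix p assume "p \<in> ?S"
    show "eventually (\<lambda>eps. (\<forall>x. perm_comp n (\<lambda>i. perturb eps (fs i)) (fst p) x \<le> perm_comp n (\<lambda>i. perturb eps (fs i)) (snd p) x) \<longrightarrow>
              (\<forall>x. perm_comp n fs (fst p) x \<le> perm_comp n fs (snd p) x)) (nhds (0::real))"
      by (rule pair_eventually)
  qed
  then obtain d where d: "d > 0" and
    H: "\<And>eps::real. dist eps 0 < d \<Longrightarrow> \<forall>p\<in>?S.
          (\<forall>x. perm_comp n (\<lambda>i. perturb eps (fs i)) (fst p) x \<le> perm_comp n (\<lambda>i. perturb eps (fs i)) (snd p) x) \<longrightarrow>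
              (\<forall>x. perm_comp n fs (fst p) x \<le> perm_comp n fs (snd p) x)"
    unfolding eventually_nhds_metric by blast
  show ?thesis
  proof (intro exI[of _ d] conjI allI impI d)
    fix eps :: real and \<sigma> \<rho> y
    assume "\<bar>eps\<bar> < d" "\<sigma> permutes {..<n}" "\<rho> permutes {..<n}"
      "\<forall>x. perm_comp n (\<lambda>i. perturb eps (fs i)) \<sigma> x \<le> perm_comp n (\<lambda>i. perturb eps (fs i)) \<rho> x"
    with H[of eps] show "perm_comp n fs \<sigma> y \<le> perm_comp n fs \<rho> y"
      by (auto simp: dist_real_def)
  qed
qed

end
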